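(* Let $n,q_1,\ldots,q_n\in\mathbb{N}$ and let $(\mathfrak{X}_1,\ldots,\mathfrak{X}_n)$ and $(\mathfrak{Y}_1,\ldots,\mathfrak{Y}_n)$ be random vectors supported on $\mathcal{S}_{++}^{q_1}\times\cdots\times\mathcal{S}_{++}^{q_n}$. Then $(\mathfrak{X}_1,\ldots,\mathfrak{X}_n)\preceq_{\mathrm{Lt}}(\mathfrak{Y}_1,\ldots,\mathfrak{Y}_n)$ if and only if \[\mathbb{E}\Big\{\prod_{i=1}^n\phi_i(\mathfrak{X}_i)\Big\}\ge\mathbb{E}\Big\{\prod_{i=1}^n\phi_i(\mathfrak{Y}_i)\Big\}\] for all matrix-variate completely monotone functions $\phi_i:\mathcal{S}_{++}^{q_i}\to[0,\infty)$, $i\in\{1,\ldots,n\}$, whenever the expectations are finite.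
   Context: $\mathcal{S}_+^q$, $\mathcal{S}_{++}^q$ denote the symmetric nonnegative definite and positive definite real $q\times q$ matrices; $\mathrm{etr}(\cdot)=\exp\{\mathrm{tr}(\cdot)\}$. A map $\phi:\mathcal{S}_{++}^q\to[0,\infty)$ is matrix-variate completely monotone if there is a measure $\mu$ on $\mathcal{S}_+^q$ with $\phi(T)=\int_{\mathcal{S}_+^q}\mathrm{etr}(-TX)\,\mu(\mathrm{d}X)$ for all $T\in\mathcal{S}_{++}^q$. For random vectors of matrices $(\mathfrak{X}_1,\ldots,\mathfrak{X}_n)$, $(\mathfrak{Y}_1,\ldots,\mathfrak{Y}_n)$ on $\mathcal{S}_+^{q_1}\times\cdots\times\mathcal{S}_+^{q_n}$, one writes $(\mathfrak{X}_1,\ldots,\mathfrak{X}_n)\preceq_{\mathrm{Lt}}(\mathfrak{Y}_1,\ldots,\mathfrak{Y}_n)$ (matrix-variate Laplace transform order) if $\mathbb{E}\{\prod_{i=1}^n\mathrm{etr}(-T_i\mathfrak{X}_i)\}\ge\mathbb{E}\{\prod_{i=1}^n\mathrm{etr}(-T_i\mathfrak{Y}_i)\}$ for all $T_i\in\mathcal{S}_+^{q_i}$, $i\in\{1,\ldots,n\}$. *)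

theory Defs
  imports "HOL-Probability.Probability"
begin

text \<open>Real q x q matrices are represented as functions nat => nat => real whose
entries outside {..<q} x {..<q} vanish (zero padding).  The type carries the
product topology, hence a Borel sigma-algebra.\<close>

type_synonym rmat = "nat \<Rightarrow> nat \<Rightarrow> real"

definition sym_mats :: "nat \<Rightarrow> rmat set" where
  "sym_mats q = {A. (\<forall>i j. (q \<le> i \<or> q \<le> j) \<longrightarrow> A i j = 0) \<and>
                    (\<forall>i<q. \<forall>j<q. A i j = A j i)}"

definition psd_mats :: "nat \<Rightarrow> rmat set" where
  "psd_mats q = {A \<in> sym_mats q.
      \<forall>x::nat \<Rightarrow> real. (\<Sum>i<q. \<Sum>j<q. x i * A i j * x j) \<ge> 0}"

definition pd_mats :: "nat \<Rightarrow> rmat set" where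
  "pd_mats q = {A \<in> sym_mats q.
      \<forall>x::nat \<Rightarrow> real. (\<exists>i<q. x i \<noteq> 0) \<longrightarrow> (\<Sum>i<q. \<Sum>j<q. x i * A i j * x j) > 0}"

definition mtr_prod :: "nat \<Rightarrow> rmat \<Rightarrow> rmat \<Rightarrow> real" where
  "mtr_prod q A B = (\<Sum>i<q. \<Sum>j<q. A i j * B j i)"

definition etr_neg :: "nat \<Rightarrow> rmat \<Rightarrow> rmat \<Rightarrow> real" where
  "etr_neg q T X = exp (- mtr_prod q T X)"

definition matrix_cm :: "nat \<Rightarrow> (rmat \<Rightarrow> real) \<Rightarrow> bool" where
  "matrix_cm q \<phi> \<longleftrightarrow> (\<forall>T\<in>pd_mats q. \<phi> T \<ge> 0) \<and>
     (\<exists>\<mu> :: rmat measure. sets \<mu> = sets (restrict_space borel (psd_mats q)) \<and>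
        (\<forall>T\<in>pd_mats q. ennreal (\<phi> T) = (\<integral>\<^sup>+ X. ennreal (etr_neg q T X) \<partial>\<mu>)))"

definition lt_order ::
  "nat \<Rightarrow> (nat \<Rightarrow> nat) \<Rightarrow> 'a measure \<Rightarrow> ('a \<Rightarrow> nat \<Rightarrow> rmat)
     \<Rightarrow> 'b measure \<Rightarrow> ('b \<Rightarrow> nat \<Rightarrow> rmat) \<Rightarrow> bool" where
  "lt_order n q M X N Y \<longleftrightarrow>
     (\<forall>T :: nat \<Rightarrow> rmat. (\<forall>i<n. T i \<in> psd_mats (q i)) \<longrightarrow>
        (\<integral>\<^sup>+ \<omega>. ennreal (\<Prod>i<n. etr_neg (q i) (T i) (X \<omega> i)) \<partial>M)
        \<ge> (\<integral>\<^sup>+ \<omega>. ennreal (\<Prod>i<n. etr_neg (q i) (T i) (Y \<omega> i)) \<partial>N))"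

end

theory Submission
  imports Defs
begin


definition qf :: "nat set \<Rightarrow> rmat \<Rightarrow> (nat \<Rightarrow> real) \<Rightarrow> real" where
  "qf I T x = (\<Sum>i\<in>I. \<Sum>j\<in>I. x i * T i j * x j)"

lemma qf_subset:
  assumes "finite I" "J \<subseteq> I" "\<forall>i\<in>I-J. x i = 0"
  shows "qf I T x = qf J T x"
proof -
  have "qf I T x = (\<Sum>i\<in>J. \<Sum>j\<in>I. x i * T i j * x j)"
    unfolding qf_def using assms by (intro sum.mono_neutral_right) auto
  also have "\<dots> = qf J T x"
    unfolding qf_def using assms by (intro sum.cong refl sum.mono_neutral_right) auto
  finally show ?thesis .
qed

lemma qf_shift:
  assumes "finite I" "k \<in> I" "\<forall>i\<in>I. \<forall>j\<in>I. T i j = T j i"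
  shows "qf I T (\<lambda>i. x i + (if i = k then c else 0)) =
     qf I T x + 2 * c * (\<Sum>i\<in>I. x i * T i k) + c * c * T k k"
proof -
  have e: "(x i + (if i = k then c else 0)) * T i j * (x j + (if j = k then c else 0)) =
     x i * T i j * x j + (if j = k then x i * T i k * c else 0)
     + (if i = k then c * T k j * x j else 0) + (if i = k \<and> j = k then c * T k k * c else 0)" for i j
    by (auto simp: algebra_simps)
  have s2: "(\<Sum>j\<in>I. c * T k j * x j) = c * (\<Sum>i\<in>I. x i * T i k)"
    by (simp add: sum_distrib_left assms(3)[rule_format, OF assms(2)] algebra_simps)
  have t2: "(\<Sum>i\<in>I. \<Sum>j\<in>I. (if j = k then x i * T i k * c else 0)) = c * (\<Sum>i\<in>I. x i * T i k)"
    using assms(1,2) by (simp add: sum_distrib_left algebra_simps)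
  have t3: "(\<Sum>i\<in>I. \<Sum>j\<in>I. (if i = k then c * T k j * x j else 0)) = c * (\<Sum>i\<in>I. x i * T i k)"
  proof -
    have "(\<Sum>i\<in>I. \<Sum>j\<in>I. (if i = k then c * T k j * x j else 0))
       = (\<Sum>i\<in>I. if i = k then (\<Sum>j\<in>I. c * T k j * x j) else 0)"
      by (intro sum.cong refl) auto
    also have "\<dots> = c * (\<Sum>i\<in>I. x i * T i k)" using assms(1,2) s2 by simp
    finally show ?thesis .
  qed
  have t4: "(\<Sum>i\<in>I. \<Sum>j\<in>I. (if i = k \<and> j = k then c * T k k * c else 0)) = c * c * T k k"
  proof -
    have "(\<Sum>i\<in>I. \<Sum>j\<in>I. (if i = k \<and> j = k then c * T k k * c else 0))
       = (\<Sum>i\<in>I. if i = k then (\<Sum>j\<in>I. (if j = k then c * T k k * c else 0)) else 0)"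
      by (intro sum.cong refl) auto
    also have "\<dots> = c * c * T k k" using assms(1,2) by simp
    finally show ?thesis .
  qed
  show ?thesis
    unfolding qf_def e sum.distrib t2 t3 t4 by simp
qed

lemma trace_nonneg_aux:
  fixes I :: "nat set" and X :: rmat
  assumes I: "finite I" and Xpsd: "\<forall>x. qf I X x \<ge> 0"
  shows "finite S \<Longrightarrow> \<forall>T. (\<forall>i\<in>I. \<forall>j\<in>I. T i j = T j i) \<and> (\<forall>x. qf I T x \<ge> 0) \<and>
     (\<forall>i\<in>I. \<forall>j\<in>I. (i \<notin> S \<or> j \<notin> S) \<longrightarrow> T i j = 0) \<longrightarrow> (\<Sum>i\<in>I. \<Sum>j\<in>I. T i j * X j i) \<ge> 0"
proof (induction S rule: finite_induct)
  case empty
  then show ?case by auto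
next
  case (insert k S)
  show ?case
  proof (intro allI impI, elim conjE)
    fix T assume sym: "\<forall>i\<in>I. \<forall>j\<in>I. T i j = T j i" and psd: "\<forall>x. qf I T x \<ge> 0"
      and supp: "\<forall>i\<in>I. \<forall>j\<in>I. (i \<notin> insert k S \<or> j \<notin> insert k S) \<longrightarrow> T i j = 0"
    show "(\<Sum>i\<in>I. \<Sum>j\<in>I. T i j * X j i) \<ge> 0"
    proof (cases "k \<in> I")
      case False
      then have "\<forall>i\<in>I. \<forall>j\<in>I. (i \<notin> S \<or> j \<notin> S) \<longrightarrow> T i j = 0" using supp by auto
      then show ?thesis using insert.IH sym psd by blast
    next
      case kI: True
      have Tkk: "T k k \<ge> 0"
      proof -
        have "qf I T (\<lambda>i. if i = k then 1 else 0) = qf {k} T (\<lambda>i. if i = k then 1 else 0)"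
          using kI I by (intro qf_subset) auto
        then show ?thesis using psd[rule_format, of "\<lambda>i. if i = k then 1 else 0"] by (simp add: qf_def)
      qed
      show ?thesis
      proof (cases "T k k = 0")
        case True
        have row: "T k j = 0" if jI: "j \<in> I" for j
        proof (rule ccontr)
          assume nz: "T k j \<noteq> 0"
          then have jk: "j \<noteq> k" using True by auto
          define t where "t = - (T j j + 1) / (2 * T k j)"
          define x where "x = (\<lambda>i. if i = k then t else if i = j then 1 else (0::real))"
          have "qf I T x = qf {k, j} T x"
            using kI jI I by (intro qf_subset) (auto simp: x_def)
          also have "\<dots> = 2 * t * T k j + T j j"
            using jk True sym kI jI by (simp add: qf_def x_def algebra_simps)
          also have "\<dots> = -1" using nz by (simp add: t_def field_simps)
          finally show False using psd by (metis linorder_not_le neg_less_0_iff_less zero_less_one)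
        qed
        have "\<forall>i\<in>I. \<forall>j\<in>I. (i \<notin> S \<or> j \<notin> S) \<longrightarrow> T i j = 0"
        proof (intro ballI impI)
          fix i j assume iI: "i \<in> I" and jI: "j \<in> I" and "i \<notin> S \<or> j \<notin> S"
          then show "T i j = 0"
            using supp row sym kI by (cases "i = k"; cases "j = k") auto
        qed
        then show ?thesis using insert.IH sym psd by blast
      next
        case False
        then have pos: "T k k > 0" using Tkk by auto
        define T' where "T' = (\<lambda>i j. T i j - T i k * T k j / T k k)"
        have sym': "\<forall>i\<in>I. \<forall>j\<in>I. T' i j = T' j i"
          using sym kI by (auto simp: T'_def)
        have qfT': "qf I T' x = qf I T x - (\<Sum>i\<in>I. x i * T i k)^2 / T k k" for x
        proof -
          have a: "(\<Sum>j\<in>I. T k j * x j) = (\<Sum>i\<in>I. x i * T i k)"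
            using sym kI by (intro sum.cong) (auto simp: algebra_simps)
          have "qf I T' x = qf I T x - (\<Sum>i\<in>I. \<Sum>j\<in>I. (x i * T i k) * (T k j * x j)) / T k k"
            unfolding qf_def T'_def
            by (simp add: sum_subtractf sum_divide_distrib algebra_simps)
          also have "(\<Sum>i\<in>I. \<Sum>j\<in>I. (x i * T i k) * (T k j * x j)) = (\<Sum>i\<in>I. x i * T i k) * (\<Sum>j\<in>I. T k j * x j)"
            by (simp add: sum_product)
          finally show ?thesis using a by (simp add: power2_eq_square)
        qed
        have psd': "\<forall>x. qf I T' x \<ge> 0"
        proof
          fix x
          define s where "s = (\<Sum>i\<in>I. x i * T i k)"
          have "qf I T (\<lambda>i. x i + (if i = k then - s / T k k else 0)) = qf I T x + 2 * (- s / T k k) * s + (- s / T k k) * (- s / T k k) * T k k"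
            using qf_shift[OF I kI sym] unfolding s_def by blast
          also have "\<dots> = qf I T' x" using pos by (simp add: qfT' s_def power2_eq_square field_simps)
          finally show "qf I T' x \<ge> 0" using psd by metis
        qed
        have supp': "\<forall>i\<in>I. \<forall>j\<in>I. (i \<notin> S \<or> j \<notin> S) \<longrightarrow> T' i j = 0"
        proof (intro ballI impI)
          fix i j assume iI: "i \<in> I" and jI: "j \<in> I" and ij: "i \<notin> S \<or> j \<notin> S"
          show "T' i j = 0"
          proof (cases "i = k \<or> j = k")
            case True then show ?thesis using pos by (auto simp: T'_def)
          next
            case False
            then have "T i j = 0" "T i k = 0 \<or> T k j = 0" using ij supp iI jI kI by auto
            then show ?thesis by (auto simp: T'_def)
          qed
        qed
        have IH': "(\<Sum>i\<in>I. \<Sum>j\<in>I. T' i j * X j i) \<ge> 0"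
          using insert.IH sym' psd' supp' by blast
        have v: "(\<Sum>i\<in>I. \<Sum>j\<in>I. T i k * T k j * X j i) = qf I X (\<lambda>i. T i k)"
        proof -
          have "(\<Sum>i\<in>I. \<Sum>j\<in>I. T i k * T k j * X j i) = (\<Sum>i\<in>I. \<Sum>j\<in>I. T i k * T j k * X j i)"
            using sym kI by (intro sum.cong refl) auto
          also have "\<dots> = (\<Sum>j\<in>I. \<Sum>i\<in>I. T j k * X j i * T i k)"
            by (subst sum.swap) (simp add: algebra_simps)
          finally show ?thesis by (simp add: qf_def)
        qed
        have "(\<Sum>i\<in>I. \<Sum>j\<in>I. T i j * X j i) = (\<Sum>i\<in>I. \<Sum>j\<in>I. T' i j * X j i)
              + (\<Sum>i\<in>I. \<Sum>j\<in>I. T i k * T k j * X j i) / T k k"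
          unfolding T'_def by (simp add: sum_subtractf sum_divide_distrib algebra_simps sum.distrib[symmetric])
        also have "\<dots> \<ge> 0" using IH' v Xpsd pos by simp
        finally show ?thesis .
      qed
    qed
  qed
qed

lemma psd_qf: "A \<in> psd_mats q \<Longrightarrow> qf {..<q} A x \<ge> 0"
  by (simp add: psd_mats_def qf_def)

lemma pd_psd: "A \<in> pd_mats q \<Longrightarrow> A \<in> psd_mats q"
  unfolding pd_mats_def psd_mats_def
proof (safe)
  fix x assume A: "A \<in> sym_mats q" and h: "\<forall>x. (\<exists>i<q. x i \<noteq> 0) \<longrightarrow> 0 < (\<Sum>i<q. \<Sum>j<q. x i * A i j * x j)"
  show "0 \<le> (\<Sum>i<q. \<Sum>j<q. x i * A i j * x j)"
  proof (cases "\<exists>i<q. x i \<noteq> 0")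
    case True then show ?thesis using h by (simp add: less_imp_le)
  next
    case False then show ?thesis by simp
  qed
qed

lemma trace_nonneg:
  assumes "T \<in> psd_mats q" "Y \<in> psd_mats q"
  shows "mtr_prod q T Y \<ge> 0"
proof -
  have "\<forall>i\<in>{..<q}. \<forall>j\<in>{..<q}. T i j = T j i" using assms(1) by (auto simp: psd_mats_def sym_mats_def)
  moreover have "\<forall>x. qf {..<q} T x \<ge> 0" "\<forall>x. qf {..<q} Y x \<ge> 0" using assms psd_qf by auto
  ultimately show ?thesis
    using trace_nonneg_aux[of "{..<q}" Y "{..<q}"] unfolding mtr_prod_def by blast
qed

lemma mtr_prod_sym: "mtr_prod q A B = mtr_prod q B A"
  unfolding mtr_prod_def by (subst sum.swap) (simp add: mult.commute)



lemma coord2[measurable]: "(\<lambda>X::rmat. X a b) \<in> borel_measurable borel"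
  by (rule measurable_comp[OF measurable_product_coordinates measurable_product_coordinates, unfolded comp_def])

lemma etr_borel[measurable]: "(\<lambda>X. etr_neg q S X) \<in> borel_measurable borel"
  unfolding etr_neg_def mtr_prod_def by measurable

lemma measurable_etr:
  assumes f: "\<And>a b. (\<lambda>x. f x a b) \<in> borel_measurable K"
    and g: "\<And>a b. (\<lambda>x. g x a b) \<in> borel_measurable K"
  shows "(\<lambda>x. etr_neg q (f x) (g x)) \<in> borel_measurable K"
  unfolding etr_neg_def mtr_prod_def using f g by measurable

lemma coord_meas:
  assumes "F \<in> borel_measurable K"
  shows "(\<lambda>x. (F x :: rmat) a b) \<in> borel_measurable K"
  using measurable_product_then_coordinatewise[OF measurable_product_then_coordinatewise[OF assms]] .

lemma etr_meas_restr:
  "(\<lambda>X. ennreal (etr_neg q S X)) \<in> borel_measurable (restrict_space borel P)"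
  by (intro measurable_restrict_space1) measurable

lemma space_psdM:
  assumes "sets \<mu> = sets (restrict_space borel (psd_mats q))"
  shows "space \<mu> = psd_mats q"
  using sets_eq_imp_space_eq[OF assms] by (simp add: space_restrict_space)

definition idm :: "nat \<Rightarrow> rmat" where
  "idm q = (\<lambda>i j. if i = j \<and> i < q then 1 else 0)"

lemma idm_pd: "idm q \<in> pd_mats q"
proof -
  have r: "(\<Sum>j<q. x i * idm q i j * x j) = x i * x i" if "i < q" for i and x :: "nat \<Rightarrow> real"
  proof -
    have "(\<Sum>j<q. x i * idm q i j * x j) = (\<Sum>j<q. if j = i then x i * x i else 0)"
      by (intro sum.cong refl) (auto simp: idm_def)
    then show ?thesis using that by simp
  qed
  have "idm q \<in> sym_mats q" by (auto simp: sym_mats_def idm_def)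
  moreover have "0 < (\<Sum>i<q. \<Sum>j<q. x i * idm q i j * x j)" if "i < q" "x i \<noteq> 0" for x i
  proof -
    have "(\<Sum>i<q. \<Sum>j<q. x i * idm q i j * x j) = (\<Sum>i<q. x i * x i)" using r by simp
    also have "\<dots> > 0" using that
      by (intro sum_pos2[of _ i]) (auto simp: zero_less_mult_iff)
    finally show ?thesis .
  qed
  ultimately show ?thesis unfolding pd_mats_def by blast
qed

lemma cm_sigma_finite:
  assumes sets: "sets \<mu> = sets (restrict_space borel (psd_mats q))"
    and rep: "\<forall>T\<in>pd_mats q. ennreal (\<phi> T) = (\<integral>\<^sup>+ X. ennreal (etr_neg q T X) \<partial>\<mu>)"
  shows "sigma_finite_measure \<mu>"
proof
  define g where "g = (\<lambda>X. etr_neg q (idm q) X)"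
  have gm[measurable]: "g \<in> borel_measurable \<mu>"
    unfolding g_def measurable_cong_sets[OF sets refl]
    by (intro measurable_restrict_space1) measurable
  have gpos: "g x > 0" for x by (simp add: g_def etr_neg_def)
  have fin: "(\<integral>\<^sup>+ X. ennreal (g X) \<partial>\<mu>) < \<infinity>"
  proof -
    have "(\<integral>\<^sup>+ X. ennreal (g X) \<partial>\<mu>) = ennreal (\<phi> (idm q))"
      using rep idm_pd unfolding g_def by simp
    then show ?thesis by simp
  qed
  have Am: "{x\<in>space \<mu>. 1 \<le> real (Suc k) * g x} \<in> sets \<mu>" for k
    by measurable
  define A where "A = range (\<lambda>k::nat. {x\<in>space \<mu>. 1 \<le> real (Suc k) * g x})"
  show "\<exists>A. countable A \<and> A \<subseteq> sets \<mu> \<and> \<Union> A = space \<mu> \<and> (\<forall>a\<in>A. emeasure \<mu> a \<noteq> \<infinity>)"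
  proof (intro exI conjI)
    show "countable A" unfolding A_def by simp
    show "A \<subseteq> sets \<mu>" unfolding A_def using Am by blast
    show "\<Union> A = space \<mu>"
    proof
      show "\<Union> A \<subseteq> space \<mu>" unfolding A_def by auto
      show "space \<mu> \<subseteq> \<Union> A"
      proof
        fix x assume x: "x \<in> space \<mu>"
        obtain k :: nat where k: "1 / g x < real k" using reals_Archimedean2 by blast
        have "1 < real k * g x" using k gpos[of x] by (simp add: field_simps)
        also have "\<dots> \<le> real (Suc k) * g x" using gpos[of x] by (intro mult_right_mono) auto
        finally have "1 \<le> real (Suc k) * g x" by simp
        then show "x \<in> \<Union> A" unfolding A_def using x by blast
      qed
    qed
    show "\<forall>a\<in>A. emeasure \<mu> a \<noteq> \<infinity>"
    proof
      fix a assume "a \<in> A"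
      then obtain k where a: "a = {x\<in>space \<mu>. 1 \<le> real (Suc k) * g x}" unfolding A_def by auto
      have am: "a \<in> sets \<mu>" unfolding a by (rule Am)
      have "emeasure \<mu> a = (\<integral>\<^sup>+ x. indicator a x \<partial>\<mu>)" using am by simp
      also have "\<dots> \<le> (\<integral>\<^sup>+ x. ennreal (real (Suc k)) * ennreal (g x) \<partial>\<mu>)"
      proof (intro nn_integral_mono)
        fix x assume "x \<in> space \<mu>"
        show "indicator a x \<le> ennreal (real (Suc k)) * ennreal (g x)"
        proof (cases "x \<in> a")
          case True
          then have "1 \<le> real (Suc k) * g x" unfolding a by blast
          then have "ennreal 1 \<le> ennreal (real (Suc k) * g x)" by (rule ennreal_leI)
          then show ?thesis using True gpos[of x]
            by (simp add: ennreal_mult[symmetric] del: of_nat_Suc)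
        next
          case False then show ?thesis by simp
        qed
      qed
      also have "\<dots> = ennreal (real (Suc k)) * (\<integral>\<^sup>+ x. ennreal (g x) \<partial>\<mu>)"
        by (intro nn_integral_cmult) measurable
      also have "\<dots> < \<infinity>" using fin by (simp add: ennreal_mult_less_top)
      finally show "emeasure \<mu> a \<noteq> \<infinity>" by simp
    qed
  qed
qed



lemma etr_borel1[measurable]: "(\<lambda>A. etr_neg q A S) \<in> borel_measurable borel"
  unfolding etr_neg_def mtr_prod_def by measurable

lemma key_eq:
  fixes X :: "'a \<Rightarrow> nat \<Rightarrow> rmat" and \<nu> :: "nat \<Rightarrow> rmat measure"
  assumes M: "prob_space M"
    and Xm: "\<forall>i<n. (\<lambda>\<omega>. X \<omega> i) \<in> borel_measurable M"
    and Xpd: "AE \<omega> in M. \<forall>i<n. X \<omega> i \<in> pd_mats (q i)"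
    and sf: "\<forall>i. sigma_finite_measure (\<nu> i)"
    and sets: "\<forall>i<n. sets (\<nu> i) = sets (restrict_space borel (psd_mats (q i)))"
    and rep: "\<forall>i<n. \<forall>T\<in>pd_mats (q i). \<phi> i T \<ge> 0 \<and> ennreal (\<phi> i T) = (\<integral>\<^sup>+ A. ennreal (etr_neg (q i) T A) \<partial>\<nu> i)"
  shows "(\<integral>\<^sup>+\<omega>. ennreal (\<Prod>i<n. \<phi> i (X \<omega> i)) \<partial>M) =
     (\<integral>\<^sup>+ t. (\<integral>\<^sup>+ \<omega>. ennreal (\<Prod>i<n. etr_neg (q i) (t i) (X \<omega> i)) \<partial>M) \<partial>(PiM {..<n} \<nu>))"
proof -
  interpret P: product_sigma_finite \<nu> using sf by (simp add: product_sigma_finite_def)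
  interpret PS: sigma_finite_measure "PiM {..<n} \<nu>" using P.sigma_finite by simp
  interpret M: prob_space M by fact
  interpret MP: pair_sigma_finite M "PiM {..<n} \<nu>" by unfold_locales
  have compP: "(\<lambda>t. t i a b) \<in> borel_measurable (PiM {..<n} \<nu>)" if "i < n" for i a b
  proof -
    have "(\<lambda>A::rmat. A a b) \<in> borel_measurable (\<nu> i)"
      unfolding measurable_cong_sets[OF sets[rule_format, OF that] refl]
      by (intro measurable_restrict_space1) measurable
    then show ?thesis
      using measurable_comp[OF measurable_component_singleton[of i "{..<n}" \<nu>]] that
      by (simp add: comp_def)
  qed
  have fm: "(\<lambda>(\<omega>, t). ennreal (\<Prod>i<n. etr_neg (q i) (t i) (X \<omega> i))) \<in> borel_measurable (M \<Otimes>\<^sub>M PiM {..<n} \<nu>)"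
  proof -
    have "(\<lambda>p. \<Prod>i<n. etr_neg (q i) (snd p i) (X (fst p) i)) \<in> borel_measurable (M \<Otimes>\<^sub>M PiM {..<n} \<nu>)"
    proof (intro borel_measurable_prod)
      fix i assume "i \<in> {..<n}"
      then have i: "i < n" by simp
      show "(\<lambda>p. etr_neg (q i) (snd p i) (X (fst p) i)) \<in> borel_measurable (M \<Otimes>\<^sub>M PiM {..<n} \<nu>)"
      proof (rule measurable_etr)
        fix a b
        show "(\<lambda>p. snd p i a b) \<in> borel_measurable (M \<Otimes>\<^sub>M PiM {..<n} \<nu>)"
          using measurable_comp[OF measurable_snd compP[OF i]] by (simp add: comp_def)
        show "(\<lambda>p. X (fst p) i a b) \<in> borel_measurable (M \<Otimes>\<^sub>M PiM {..<n} \<nu>)"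
          using measurable_comp[OF measurable_fst coord_meas[OF Xm[rule_format, OF i]]] by (simp add: comp_def)
      qed
    qed
    then show ?thesis by (simp add: case_prod_beta')
  qed
  have pw: "ennreal (\<Prod>i<n. \<phi> i (X \<omega> i)) = (\<integral>\<^sup>+ t. ennreal (\<Prod>i<n. etr_neg (q i) (t i) (X \<omega> i)) \<partial>(PiM {..<n} \<nu>))"
    if pd: "\<forall>i<n. X \<omega> i \<in> pd_mats (q i)" for \<omega>
  proof -
    have "ennreal (\<Prod>i<n. \<phi> i (X \<omega> i)) = (\<Prod>i<n. ennreal (\<phi> i (X \<omega> i)))"
      using rep pd by (intro prod_ennreal[symmetric]) auto
    also have "\<dots> = (\<Prod>i<n. \<integral>\<^sup>+ A. ennreal (etr_neg (q i) A (X \<omega> i)) \<partial>\<nu> i)"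
    proof (intro prod.cong refl)
      fix i assume "i \<in> {..<n}"
      then show "ennreal (\<phi> i (X \<omega> i)) = (\<integral>\<^sup>+ A. ennreal (etr_neg (q i) A (X \<omega> i)) \<partial>\<nu> i)"
        using rep pd by (simp add: etr_neg_def mtr_prod_sym[of "q i" "X \<omega> i"])
    qed
    also have "\<dots> = (\<integral>\<^sup>+ t. (\<Prod>i<n. ennreal (etr_neg (q i) (t i) (X \<omega> i))) \<partial>(PiM {..<n} \<nu>))"
    proof (rule P.product_nn_integral_prod[symmetric])
      show "finite {..<n}" by simp
      fix i assume "i \<in> {..<n}"
      then show "(\<lambda>A. ennreal (etr_neg (q i) A (X \<omega> i))) \<in> borel_measurable (\<nu> i)"
        using sets unfolding lessThan_iff
        by (subst measurable_cong_sets[OF sets[rule_format] refl]) (auto intro!: measurable_restrict_space1)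
    qed
    also have "\<dots> = (\<integral>\<^sup>+ t. ennreal (\<Prod>i<n. etr_neg (q i) (t i) (X \<omega> i)) \<partial>(PiM {..<n} \<nu>))"
      by (intro nn_integral_cong prod_ennreal) (simp add: etr_neg_def)
    finally show ?thesis .
  qed
  have "(\<integral>\<^sup>+\<omega>. ennreal (\<Prod>i<n. \<phi> i (X \<omega> i)) \<partial>M) =
     (\<integral>\<^sup>+\<omega>. (\<integral>\<^sup>+ t. ennreal (\<Prod>i<n. etr_neg (q i) (t i) (X \<omega> i)) \<partial>(PiM {..<n} \<nu>)) \<partial>M)"
    using Xpd by (intro nn_integral_cong_AE) (rule eventually_mono, assumption, rule pw)
  also have "\<dots> = (\<integral>\<^sup>+ t. (\<integral>\<^sup>+ \<omega>. ennreal (\<Prod>i<n. etr_neg (q i) (t i) (X \<omega> i)) \<partial>M) \<partial>(PiM {..<n} \<nu>))"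
    using MP.Fubini'[OF fm] by simp
  finally show ?thesis .
qed



theorem proposition3p1:
  fixes n :: nat and q :: "nat \<Rightarrow> nat"
    and M :: "'a measure" and X :: "'a \<Rightarrow> nat \<Rightarrow> rmat"
    and N :: "'b measure" and Y :: "'b \<Rightarrow> nat \<Rightarrow> rmat"
  assumes "n \<ge> 1" and "\<forall>i<n. q i \<ge> 1"
    and "prob_space M" and "prob_space N"
    and "\<forall>i<n. (\<lambda>\<omega>. X \<omega> i) \<in> borel_measurable M"
    and "\<forall>i<n. (\<lambda>\<omega>. Y \<omega> i) \<in> borel_measurable N"
    and "AE \<omega> in M. \<forall>i<n. X \<omega> i \<in> pd_mats (q i)"
    and "AE \<omega> in N. \<forall>i<n. Y \<omega> i \<in> pd_mats (q i)"
  shows "lt_order n q M X N Y \<longleftrightarrow>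
    (\<forall>\<phi> :: nat \<Rightarrow> rmat \<Rightarrow> real. (\<forall>i<n. matrix_cm (q i) (\<phi> i)) \<longrightarrow>
       (\<integral>\<^sup>+ \<omega>. ennreal (\<Prod>i<n. \<phi> i (X \<omega> i)) \<partial>M) \<noteq> \<infinity> \<longrightarrow>
       (\<integral>\<^sup>+ \<omega>. ennreal (\<Prod>i<n. \<phi> i (Y \<omega> i)) \<partial>N) \<noteq> \<infinity> \<longrightarrow>
       (\<integral>\<^sup>+ \<omega>. ennreal (\<Prod>i<n. \<phi> i (X \<omega> i)) \<partial>M)
         \<ge> (\<integral>\<^sup>+ \<omega>. ennreal (\<Prod>i<n. \<phi> i (Y \<omega> i)) \<partial>N))"
proof
  assume lt: "lt_order n q M X N Y"
  show "\<forall>\<phi> :: nat \<Rightarrow> rmat \<Rightarrow> real. (\<forall>i<n. matrix_cm (q i) (\<phi> i)) \<longrightarrow>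
       (\<integral>\<^sup>+ \<omega>. ennreal (\<Prod>i<n. \<phi> i (X \<omega> i)) \<partial>M) \<noteq> \<infinity> \<longrightarrow>
       (\<integral>\<^sup>+ \<omega>. ennreal (\<Prod>i<n. \<phi> i (Y \<omega> i)) \<partial>N) \<noteq> \<infinity> \<longrightarrow>
       (\<integral>\<^sup>+ \<omega>. ennreal (\<Prod>i<n. \<phi> i (X \<omega> i)) \<partial>M)
         \<ge> (\<integral>\<^sup>+ \<omega>. ennreal (\<Prod>i<n. \<phi> i (Y \<omega> i)) \<partial>N)"
  proof (intro allI impI)
    fix \<phi> :: "nat \<Rightarrow> rmat \<Rightarrow> real"
    assume cm: "\<forall>i<n. matrix_cm (q i) (\<phi> i)"
    have "\<forall>i. \<exists>\<mu> :: rmat measure. i < n \<longrightarrow> sets \<mu> = sets (restrict_space borel (psd_mats (q i))) \<and>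
        (\<forall>T\<in>pd_mats (q i). ennreal (\<phi> i T) = (\<integral>\<^sup>+ X. ennreal (etr_neg (q i) T X) \<partial>\<mu>))"
      using cm unfolding matrix_cm_def by blast
    from choice[OF this] obtain \<mu> :: "nat \<Rightarrow> rmat measure" where \<mu>: "\<forall>i. i < n \<longrightarrow> sets (\<mu> i) = sets (restrict_space borel (psd_mats (q i))) \<and>
        (\<forall>T\<in>pd_mats (q i). ennreal (\<phi> i T) = (\<integral>\<^sup>+ X. ennreal (etr_neg (q i) T X) \<partial>\<mu> i))"
      by blast
    define \<nu> where "\<nu> = (\<lambda>i. if i < n then \<mu> i else count_space {})"
    have sf: "\<forall>i. sigma_finite_measure (\<nu> i)"
    proof
      fix i show "sigma_finite_measure (\<nu> i)"
      proof (cases "i < n")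
        case True then show ?thesis
          using \<mu> cm_sigma_finite[of "\<mu> i" "q i" "\<phi> i"] by (simp add: \<nu>_def)
      next
        case False
        interpret finite_measure "count_space ({} :: rmat set)" by (rule finite_measure_count_space) simp
        show ?thesis using False by (simp add: \<nu>_def sigma_finite_measure_axioms)
      qed
    qed
    have sets: "\<forall>i<n. sets (\<nu> i) = sets (restrict_space borel (psd_mats (q i)))"
      using \<mu> by (simp add: \<nu>_def)
    have rep: "\<forall>i<n. \<forall>T\<in>pd_mats (q i). \<phi> i T \<ge> 0 \<and> ennreal (\<phi> i T) = (\<integral>\<^sup>+ A. ennreal (etr_neg (q i) T A) \<partial>\<nu> i)"
      using \<mu> cm by (simp add: \<nu>_def matrix_cm_def)
    note eqX = key_eq[OF assms(3,5,7) sf sets rep]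
    note eqY = key_eq[OF assms(4,6,8) sf sets rep]
    have sp: "t i \<in> psd_mats (q i)" if "t \<in> space (PiM {..<n} \<nu>)" "i < n" for t i
      using that space_psdM[of "\<nu> i" "q i"] sets by (auto simp: space_PiM)
    show "(\<integral>\<^sup>+ \<omega>. ennreal (\<Prod>i<n. \<phi> i (X \<omega> i)) \<partial>M) \<ge> (\<integral>\<^sup>+ \<omega>. ennreal (\<Prod>i<n. \<phi> i (Y \<omega> i)) \<partial>N)"
      unfolding eqX eqY
    proof (intro nn_integral_mono)
      fix t assume "t \<in> space (PiM {..<n} \<nu>)"
      show "(\<integral>\<^sup>+ \<omega>. ennreal (\<Prod>i<n. etr_neg (q i) (t i) (Y \<omega> i)) \<partial>N)
          \<le> (\<integral>\<^sup>+ \<omega>. ennreal (\<Prod>i<n. etr_neg (q i) (t i) (X \<omega> i)) \<partial>M)"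
      proof (rule lt[unfolded lt_order_def, rule_format])
        fix i assume "i < n" then show "t i \<in> psd_mats (q i)" using sp \<open>t \<in> space (PiM {..<n} \<nu>)\<close> by blast
      qed
    qed
  qed
next
  assume H: "\<forall>\<phi> :: nat \<Rightarrow> rmat \<Rightarrow> real. (\<forall>i<n. matrix_cm (q i) (\<phi> i)) \<longrightarrow>
       (\<integral>\<^sup>+ \<omega>. ennreal (\<Prod>i<n. \<phi> i (X \<omega> i)) \<partial>M) \<noteq> \<infinity> \<longrightarrow>
       (\<integral>\<^sup>+ \<omega>. ennreal (\<Prod>i<n. \<phi> i (Y \<omega> i)) \<partial>N) \<noteq> \<infinity> \<longrightarrow>
       (\<integral>\<^sup>+ \<omega>. ennreal (\<Prod>i<n. \<phi> i (X \<omega> i)) \<partial>M)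
         \<ge> (\<integral>\<^sup>+ \<omega>. ennreal (\<Prod>i<n. \<phi> i (Y \<omega> i)) \<partial>N)"
  show "lt_order n q M X N Y"
    unfolding lt_order_def
  proof (intro allI impI)
    fix T :: "nat \<Rightarrow> rmat" assume T: "\<forall>i<n. T i \<in> psd_mats (q i)"
    define \<phi> where "\<phi> = (\<lambda>i S. etr_neg (q i) (T i) S)"
    have cm: "\<forall>i<n. matrix_cm (q i) (\<phi> i)"
    proof (intro allI impI)
      fix i assume i: "i < n"
      let ?R = "restrict_space borel (psd_mats (q i))"
      show "matrix_cm (q i) (\<phi> i)"
        unfolding matrix_cm_def
      proof (intro conjI exI ballI)
        fix S show "\<phi> i S \<ge> 0" by (simp add: \<phi>_def etr_neg_def)
      next
        show "sets (return ?R (T i)) = sets ?R" by simp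
      next
        fix S assume "S \<in> pd_mats (q i)"
        have "(\<integral>\<^sup>+ X. ennreal (etr_neg (q i) S X) \<partial>return ?R (T i)) = ennreal (etr_neg (q i) S (T i))"
          using T i by (intro nn_integral_return) (auto simp: space_restrict_space intro: etr_meas_restr)
        also have "\<dots> = ennreal (\<phi> i S)" by (simp add: \<phi>_def etr_neg_def mtr_prod_sym[of "q i" S])
        finally show "ennreal (\<phi> i S) = (\<integral>\<^sup>+ X. ennreal (etr_neg (q i) S X) \<partial>return ?R (T i))" by simp
      qed
    qed
    have fin: "(\<integral>\<^sup>+ \<omega>. ennreal (\<Prod>i<n. \<phi> i (Z \<omega> i)) \<partial>K) \<noteq> \<infinity>"
      if K: "prob_space K" and Z: "AE \<omega> in K. \<forall>i<n. Z \<omega> i \<in> pd_mats (q i)" for K :: "'c measure" and Z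
    proof -
      interpret K: prob_space K by fact
      have "(\<integral>\<^sup>+ \<omega>. ennreal (\<Prod>i<n. \<phi> i (Z \<omega> i)) \<partial>K) \<le> (\<integral>\<^sup>+ \<omega>. 1 \<partial>K)"
      proof (intro nn_integral_mono_AE)
        show "AE \<omega> in K. ennreal (\<Prod>i<n. \<phi> i (Z \<omega> i)) \<le> 1"
          using Z
        proof (rule eventually_mono)
          fix \<omega> assume pd: "\<forall>i<n. Z \<omega> i \<in> pd_mats (q i)"
          have "(\<Prod>i<n. \<phi> i (Z \<omega> i)) \<le> 1"
          proof (intro prod_le_1 conjI)
            fix i assume "i \<in> {..<n}"
            then have "mtr_prod (q i) (T i) (Z \<omega> i) \<ge> 0"
              using T pd pd_psd trace_nonneg by auto
            then show "0 \<le> \<phi> i (Z \<omega> i)" "\<phi> i (Z \<omega> i) \<le> 1"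
              by (simp_all add: \<phi>_def etr_neg_def)
          qed
          then show "ennreal (\<Prod>i<n. \<phi> i (Z \<omega> i)) \<le> 1" by (simp add: ennreal_le_1)
        qed
      qed
      also have "\<dots> = 1" using K.emeasure_space_1 by simp
      finally have le1: "(\<integral>\<^sup>+ \<omega>. ennreal (\<Prod>i<n. \<phi> i (Z \<omega> i)) \<partial>K) \<le> 1" .
      show ?thesis
      proof
        assume "(\<integral>\<^sup>+ \<omega>. ennreal (\<Prod>i<n. \<phi> i (Z \<omega> i)) \<partial>K) = \<infinity>"
        with le1 have "(\<infinity>::ennreal) \<le> 1" by simp
        then show False using top_le[of "1::ennreal"] by simp
      qed
    qed
    have "(\<integral>\<^sup>+ \<omega>. ennreal (\<Prod>i<n. \<phi> i (X \<omega> i)) \<partial>M) \<ge> (\<integral>\<^sup>+ \<omega>. ennreal (\<Prod>i<n. \<phi> i (Y \<omega> i)) \<partial>N)"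
      using H[rule_format, OF cm[rule_format] fin[OF assms(3,7)] fin[OF assms(4,8)]] .
    then show "(\<integral>\<^sup>+ \<omega>. ennreal (\<Prod>i<n. etr_neg (q i) (T i) (Y \<omega> i)) \<partial>N)
        \<le> (\<integral>\<^sup>+ \<omega>. ennreal (\<Prod>i<n. etr_neg (q i) (T i) (X \<omega> i)) \<partial>M)"
      by (simp add: \<phi>_def)
  qed
qed

end
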